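(* Let $r:\mathfrak h^*\to\wedge^2\mathfrak g$ be a smooth map and let $\Lambda=\sum_{i=1}^l h_i\wedge\frac{\partial}{\partial\lambda^i}+r(\lambda)\in\Gamma(\wedge^2A)$, where $A=T\mathfrak h^*\times\mathfrak g$ is the product Lie algebroid described in the context. Then $r$ is a triangular dynamical $r$-matrix if and only if $[\Lambda,\Lambda]=0$ (Schouten bracket of the Lie algebroid $A$), i.e. if and only if $(A,\Lambda)$ defines a triangular Lie bialgebroid $(A,A^* )$, the Lie algebroid structure on $A^*$ being the one whose differential on $\Gamma(\wedge^\bullet A)$ is $d_*=[\Lambda,\cdot\,]$.
   Context: Let $\mathfrak g$ be a finite-dimensional real Lie algebra and $\mathfrak h\subset\mathfrak g$ an abelian Lie subalgebra of dimension $l$ with basis $h_1,\dots,h_l$; let $(\lambda^1,\dots,\lambda^l)$ be the induced linear coordinates on $\mathfrak h^*$. A triangular dynamical $r$-matrix is a smooth map $r:\mathfrak h^*\to\wedge^2\mathfrak g$ such that (a) (zero weight) $[h,r(\lambda)]=0$ for all $h\in\mathfrak h$, $\lambda\in\mathfrak h^*$, where $\mathfrak g$ acts on $\wedge^2\mathfrak g$ by the adjoint action, and (b) (classical dynamical Yang–Baxter equation) $\sum_i h_i\wedge\frac{\partial r}{\partial\lambda^i}+\frac12[r,r]=0$, where $[\cdot,\cdot]:\wedge^k\mathfrak g\otimes\wedge^m\mathfrak g\to\wedge^{k+m-1}\mathfrak g$ is the Schouten-type bracket extending the Lie bracket of $\mathfrak g$. The product Lie algebroid $A=T\mathfrak h^*\times\mathfrak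 g$ over $\mathfrak h^*$ has sections $(X,f)$ with $X$ a vector field on $\mathfrak h^*$ and $f:\mathfrak h^*\to\mathfrak g$ smooth, bracket $[(X,f),(Y,g)]=([X,Y],X(g)-Y(f)+[f,g])$ and anchor the projection $(X,f)\mapsto X$; the bracket extends to a Schouten bracket on $\Gamma(\wedge^\bullet A)$. *)

theory Defs
  imports "HOL-Analysis.Analysis"
begin

text \<open>
  The Lie algebra g is modelled in a basis e_a indexed by a finite type 'n:
  its bracket is given by structure constants c a b k, i.e. [e_a,e_b] = sum_k c a b k e_k.

  Multivectors are represented by their (totally antisymmetric) components:
  a bivector P stands for (1/2) sum_{a,b} P a b e_a /\ e_b, a trivector T stands for
  (1/6) sum_{a,b,c} T a b c e_a /\ e_b /\ e_c.

  The dual h* of the abelian subalgebra h (with basis h_1..h_l, indexed by 'l) is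
  identified with real^'l via the linear coordinates lambda^i, i.e. lambda $ i = lambda^i.
\<close>

definition lie_structure :: "('n::finite \<Rightarrow> 'n \<Rightarrow> 'n \<Rightarrow> real) \<Rightarrow> bool" where
  "lie_structure c \<longleftrightarrow>
     (\<forall>a b k. c a b k = - c b a k) \<and>
     (\<forall>a b d m. (\<Sum>k\<in>UNIV. c a b k * c k d m + c b d k * c k a m + c d a k * c k b m) = 0)"

definition lie_br :: "('n::finite \<Rightarrow> 'n \<Rightarrow> 'n \<Rightarrow> real) \<Rightarrow> ('n \<Rightarrow> real) \<Rightarrow> ('n \<Rightarrow> real) \<Rightarrow> ('n \<Rightarrow> real)" where
  "lie_br c x y = (\<lambda>k. \<Sum>a\<in>UNIV. \<Sum>b\<in>UNIV. x a * y b * c a b k)"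

definition lin_indep_family :: "('l::finite \<Rightarrow> 'n::finite \<Rightarrow> real) \<Rightarrow> bool" where
  "lin_indep_family h \<longleftrightarrow> (\<forall>u. (\<forall>k. (\<Sum>i\<in>UNIV. u i * h i k) = 0) \<longrightarrow> (\<forall>i. u i = 0))"

definition abelian_family :: "('n::finite \<Rightarrow> 'n \<Rightarrow> 'n \<Rightarrow> real) \<Rightarrow> ('l::finite \<Rightarrow> 'n \<Rightarrow> real) \<Rightarrow> bool" where
  "abelian_family c h \<longleftrightarrow> (\<forall>i j. lie_br c (h i) (h j) = (\<lambda>_. 0))"

definition partial :: "'l::finite \<Rightarrow> (real^'l \<Rightarrow> real) \<Rightarrow> real^'l \<Rightarrow> real" where
  "partial i f x = deriv (\<lambda>t. f (x + t *\<^sub>R axis i 1)) 0"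

fun iter_partial :: "'l::finite list \<Rightarrow> (real^'l \<Rightarrow> real) \<Rightarrow> real^'l \<Rightarrow> real" where
  "iter_partial [] f = f"
| "iter_partial (i # is) f = partial i (iter_partial is f)"

definition smooth_fun :: "(real^'l::finite \<Rightarrow> real) \<Rightarrow> bool" where
  "smooth_fun f \<longleftrightarrow>
     (\<forall>is. continuous_on UNIV (iter_partial is f) \<and>
           (\<forall>i x. (\<lambda>t. iter_partial is f (x + t *\<^sub>R axis i 1)) differentiable (at 0)))"

definition smooth_wedge2_map :: "(real^'l::finite \<Rightarrow> 'n \<Rightarrow> 'n \<Rightarrow> real) \<Rightarrow> bool" where
  "smooth_wedge2_map r \<longleftrightarrow>
     (\<forall>x a b. r x a b = - r x b a) \<and> (\<forall>a b. smooth_fun (\<lambda>x. r x a b))"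

text \<open>Components of the trivector sum_{a,b,c} U a b c e_a /\ e_b /\ e_c.\<close>
definition alt3 :: "('i \<Rightarrow> 'i \<Rightarrow> 'i \<Rightarrow> real) \<Rightarrow> 'i \<Rightarrow> 'i \<Rightarrow> 'i \<Rightarrow> real" where
  "alt3 U a b c = U a b c - U a c b - U b a c + U b c a + U c a b - U c b a"

definition wedge12 :: "('i \<Rightarrow> real) \<Rightarrow> ('i \<Rightarrow> 'i \<Rightarrow> real) \<Rightarrow> 'i \<Rightarrow> 'i \<Rightarrow> 'i \<Rightarrow> real" where
  "wedge12 x Q = alt3 (\<lambda>a b c. x a * Q b c / 2)"

text \<open>
  Schouten bracket [P,Q] of two bivector sections of a Lie algebroid E over a base 'b that
  admits a global frame (E_I) indexed by 'i with constant structure constants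
  [E_I,E_K] = sum_M C I K M E_M and anchor acting on functions by anc I
  (i.e. anc I f = rho(E_I)(f)). This is the unique extension of the Lie algebroid bracket
  to a graded bracket on Gamma(wedge E), computed on bivectors:
  [P,Q] = sum (1/2)(P^{IJ} rho_I(Q^{KL}) + Q^{IJ} rho_I(P^{KL})) E_K /\ E_J /\ E_L
          + sum P^{IJ} Q^{KL} C_{IK}^M E_M /\ E_J /\ E_L.
\<close>
definition schouten2 ::
  "('i::finite \<Rightarrow> ('b \<Rightarrow> real) \<Rightarrow> 'b \<Rightarrow> real) \<Rightarrow> ('i \<Rightarrow> 'i \<Rightarrow> 'i \<Rightarrow> real)
   \<Rightarrow> ('b \<Rightarrow> 'i \<Rightarrow> 'i \<Rightarrow> real) \<Rightarrow> ('b \<Rightarrow> 'i \<Rightarrow> 'i \<Rightarrow> real) \<Rightarrow> 'b \<Rightarrow> 'i \<Rightarrow> 'i \<Rightarrow> 'i \<Rightarrow> real" where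
  "schouten2 anc C P Q x = alt3 (\<lambda>a b c.
      (\<Sum>I\<in>UNIV. (P x I b * anc I (\<lambda>y. Q y a c) x + Q x I b * anc I (\<lambda>y. P y a c) x) / 2)
    + (\<Sum>I\<in>UNIV. \<Sum>K\<in>UNIV. P x I b * Q x K c * C I K a))"

text \<open>The algebraic Schouten bracket on wedge g (g = Lie algebroid over a point).\<close>
definition lie_schouten2 ::
  "('n::finite \<Rightarrow> 'n \<Rightarrow> 'n \<Rightarrow> real) \<Rightarrow> ('n \<Rightarrow> 'n \<Rightarrow> real) \<Rightarrow> ('n \<Rightarrow> 'n \<Rightarrow> real) \<Rightarrow> 'n \<Rightarrow> 'n \<Rightarrow> 'n \<Rightarrow> real" where
  "lie_schouten2 c P Q = schouten2 (\<lambda>_ _ _. 0) c (\<lambda>_::unit. P) (\<lambda>_. Q) ()"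

text \<open>Adjoint action of x in g on a bivector: ad_x(u/\v) = [x,u]/\v + u/\[x,v].\<close>
definition ad_wedge2 :: "('n::finite \<Rightarrow> 'n \<Rightarrow> 'n \<Rightarrow> real) \<Rightarrow> ('n \<Rightarrow> real) \<Rightarrow> ('n \<Rightarrow> 'n \<Rightarrow> real) \<Rightarrow> 'n \<Rightarrow> 'n \<Rightarrow> real" where
  "ad_wedge2 c x Q a b = (\<Sum>d\<in>UNIV. lie_br c x (\<lambda>e. if e = d then 1 else 0) a * Q d b)
                       + (\<Sum>d\<in>UNIV. lie_br c x (\<lambda>e. if e = d then 1 else 0) b * Q a d)"

definition triangular_dynamical_r_matrix ::
  "('n::finite \<Rightarrow> 'n \<Rightarrow> 'n \<Rightarrow> real) \<Rightarrow> ('l::finite \<Rightarrow> 'n \<Rightarrow> real) \<Rightarrow> (real^'l \<Rightarrow> 'n \<Rightarrow> 'n \<Rightarrow> real) \<Rightarrow> bool" where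
  "triangular_dynamical_r_matrix c h r \<longleftrightarrow>
     smooth_wedge2_map r \<and>
     (\<forall>u x. ad_wedge2 c (\<lambda>k. \<Sum>i\<in>UNIV. u i * h i k) (r x) = (\<lambda>_ _. 0)) \<and>
     (\<forall>x. (\<lambda>a b d. (\<Sum>i\<in>UNIV. wedge12 (h i) (\<lambda>a' b'. partial i (\<lambda>y. r y a' b') x) a b d)
                   + lie_schouten2 c (r x) (r x) a b d / 2) = (\<lambda>_ _ _. 0))"

text \<open>Global frame of A indexed by 'l + 'n: E_(Inl i) = (d/d lambda^i, 0), E_(Inr a) = (0, e_a).\<close>

definition anchorA :: "'l::finite + 'n \<Rightarrow> (real^'l \<Rightarrow> real) \<Rightarrow> real^'l \<Rightarrow> real" where
  "anchorA I f x = (case I of Inl i \<Rightarrow> partial i f x | Inr a \<Rightarrow> 0)"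

definition structA :: "('n \<Rightarrow> 'n \<Rightarrow> 'n \<Rightarrow> real) \<Rightarrow> 'l + 'n \<Rightarrow> 'l + 'n \<Rightarrow> 'l + 'n \<Rightarrow> real" where
  "structA c I K M = (case (I, K, M) of (Inr a, Inr b, Inr k) \<Rightarrow> c a b k | _ \<Rightarrow> 0)"

text \<open>Lambda = sum_i h_i /\ d/d lambda^i + r(lambda), as components in the frame of A.\<close>
definition LambdaA :: "('l \<Rightarrow> 'n \<Rightarrow> real) \<Rightarrow> (real^'l \<Rightarrow> 'n \<Rightarrow> 'n \<Rightarrow> real)
                       \<Rightarrow> real^'l \<Rightarrow> 'l + 'n \<Rightarrow> 'l + 'n \<Rightarrow> real" where
  "LambdaA h r x I J = (case (I, J) of
       (Inr a, Inr b) \<Rightarrow> r x a b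
     | (Inr a, Inl i) \<Rightarrow> h i a
     | (Inl i, Inr a) \<Rightarrow> - h i a
     | (Inl i, Inl j) \<Rightarrow> 0)"

definition schoutenA :: "('n::finite \<Rightarrow> 'n \<Rightarrow> 'n \<Rightarrow> real)
   \<Rightarrow> (real^'l::finite \<Rightarrow> 'l + 'n \<Rightarrow> 'l + 'n \<Rightarrow> real) \<Rightarrow> (real^'l \<Rightarrow> 'l + 'n \<Rightarrow> 'l + 'n \<Rightarrow> real)
   \<Rightarrow> real^'l \<Rightarrow> 'l + 'n \<Rightarrow> 'l + 'n \<Rightarrow> 'l + 'n \<Rightarrow> real" where
  "schoutenA c P Q = schouten2 anchorA (structA c) P Q"

end

theory Submission
  imports Defs
begin

lemma sum_UNIV_Plus: "(\<Sum>I\<in>(UNIV::('a::finite + 'b::finite) set). f I) = (\<Sum>i\<in>UNIV. f (Inl i)) + (\<Sum>a\<in>UNIV. f (Inr a))"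
proof -
  have "sum f ((UNIV::'a set) <+> (UNIV::'b set)) = sum (f \<circ> Inl) UNIV + sum (f \<circ> Inr) UNIV"
    by (rule sum.Plus) simp_all
  then show ?thesis by simp
qed

lemma partial_const[simp]: "partial i (\<lambda>y. k) x = 0"
  by (simp add: partial_def)

definition Ux :: "('n::finite \<Rightarrow> 'n \<Rightarrow> 'n \<Rightarrow> real) \<Rightarrow> ('l::finite \<Rightarrow> 'n \<Rightarrow> real) \<Rightarrow> (real^'l \<Rightarrow> 'n \<Rightarrow> 'n \<Rightarrow> real) \<Rightarrow> real^'l \<Rightarrow> 'l + 'n \<Rightarrow> 'l + 'n \<Rightarrow> 'l + 'n \<Rightarrow> real" where
 "Ux c h r x A B C = (case A of Inl _ \<Rightarrow> 0 | Inr \<alpha> \<Rightarrow> (case B of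
     Inr \<beta> \<Rightarrow> (case C of
         Inr \<gamma> \<Rightarrow> - (\<Sum>i\<in>UNIV. h i \<beta> * partial i (\<lambda>y. r y \<alpha> \<gamma>) x) + (\<Sum>p\<in>UNIV. \<Sum>q\<in>UNIV. r x p \<beta> * r x q \<gamma> * c p q \<alpha>)
       | Inl j \<Rightarrow> (\<Sum>p\<in>UNIV. \<Sum>q\<in>UNIV. r x p \<beta> * h j q * c p q \<alpha>))
   | Inl i \<Rightarrow> (case C of
         Inr \<gamma> \<Rightarrow> (\<Sum>p\<in>UNIV. \<Sum>q\<in>UNIV. h i p * r x q \<gamma> * c p q \<alpha>)
       | Inl j \<Rightarrow> (\<Sum>p\<in>UNIV. \<Sum>q\<in>UNIV. h i p * h j q * c p q \<alpha>))))"

lemma anchorA_simps[simp]: "anchorA (Inl i) f x = partial i f x" "anchorA (Inr a) f x = 0"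
  by (simp_all add: anchorA_def)

lemma structA_simps[simp]: "structA c (Inr a) (Inr b) (Inr k) = c a b k"
  "structA c (Inl i) K M = 0" "structA c I (Inl j) M = 0" "structA c I K (Inl m) = 0"
  by (simp_all add: structA_def split: sum.splits)

lemma LambdaA_simps[simp]: "LambdaA h r x (Inr a) (Inr b) = r x a b"
  "LambdaA h r x (Inr a) (Inl i) = h i a" "LambdaA h r x (Inl i) (Inr a) = - h i a"
  "LambdaA h r x (Inl i) (Inl j) = 0"
  by (simp_all add: LambdaA_def)

lemma half_double: "(\<Sum>I\<in>A. (f I + f I) / 2) = (\<Sum>I\<in>A. (f I::real))"
  by simp

lemma schoutenA_eq: "schoutenA c (LambdaA h r) (LambdaA h r) x = alt3 (Ux c h r x)"
proof -
  have "(\<lambda>a b d.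
      (\<Sum>I\<in>UNIV. (LambdaA h r x I b * anchorA I (\<lambda>y. LambdaA h r y a d) x + LambdaA h r x I b * anchorA I (\<lambda>y. LambdaA h r y a d) x) / 2)
    + (\<Sum>I\<in>UNIV. \<Sum>K\<in>UNIV. LambdaA h r x I b * LambdaA h r x K d * structA c I K a)) = Ux c h r x"
  proof (intro ext)
    fix a b d :: "'a + 'b"
    show "(\<Sum>I\<in>UNIV. (LambdaA h r x I b * anchorA I (\<lambda>y. LambdaA h r y a d) x + LambdaA h r x I b * anchorA I (\<lambda>y. LambdaA h r y a d) x) / 2)
    + (\<Sum>I\<in>UNIV. \<Sum>K\<in>UNIV. LambdaA h r x I b * LambdaA h r x K d * structA c I K a) = Ux c h r x a b d"
      unfolding half_double
      by (cases a; cases b; cases d; simp only: sum_UNIV_Plus anchorA_simps structA_simps LambdaA_simps; simp add: Ux_def sum_negf)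
  qed
  then show ?thesis unfolding schoutenA_def schouten2_def by simp
qed

lemma alt3_swap12: "alt3 U b a d = - alt3 U a b d" by (simp add: alt3_def)
lemma alt3_swap23: "alt3 U a d b = - alt3 U a b d" by (simp add: alt3_def)

lemma Ux_LL: assumes "abelian_family c h" shows "Ux c h r x A (Inl i) (Inl j) = 0"
proof (cases A)
  case (Inr \<alpha>)
  have "lie_br c (h i) (h j) \<alpha> = 0" using assms by (simp add: abelian_family_def)
  then show ?thesis using Inr by (simp add: lie_br_def Ux_def)
qed (simp add: Ux_def)

lemma alt3_LL: assumes "abelian_family c h"
  shows "alt3 (Ux c h r x) (Inl i) (Inl j) A = 0"
  using Ux_LL[OF assms] by (simp add: alt3_def Ux_def)

lemma delta_sum: "(\<Sum>b\<in>(UNIV::'a::finite set). y * (if b = d then 1 else 0) * f b) = (y::real) * f d"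
proof -
  have eq: "(\<lambda>b. y * (if b = d then 1 else 0) * f b) = (\<lambda>b. if b = d then y * f d else 0)" by auto
  show ?thesis unfolding eq using sum.delta[of UNIV d "\<lambda>_. y * f d"] by simp
qed

lemma lie_br_delta: "lie_br c x (\<lambda>e. if e = d then 1 else 0) k = (\<Sum>a\<in>UNIV. x a * c a d k)"
  unfolding lie_br_def delta_sum ..

lemma ad_lin: "ad_wedge2 c (\<lambda>k. \<Sum>i\<in>UNIV. u i * h i k) Q a b = (\<Sum>i\<in>UNIV. u i * ad_wedge2 c (h i) Q a b)"
proof -
  have e1: "(\<Sum>a\<in>UNIV. (\<Sum>i\<in>UNIV. u i * h i a) * c a d k) = (\<Sum>i\<in>UNIV. u i * (\<Sum>a\<in>UNIV. h i a * c a d k))" for d k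
    by (simp add: sum_distrib_right sum_distrib_left mult_ac, rule sum.swap)
  have e2: "(\<Sum>d\<in>UNIV. (\<Sum>i\<in>UNIV. u i * X i d) * Y d) = (\<Sum>i\<in>UNIV. u i * (\<Sum>d\<in>UNIV. X i d * Y d))" for X Y
    by (simp add: sum_distrib_right sum_distrib_left mult_ac, rule sum.swap)
  show ?thesis
    unfolding ad_wedge2_def lie_br_delta e1 e2 by (simp only: distrib_left sum.distrib)
qed

lemma L1:
  assumes cs: "\<And>a b k. c a b k = - c b a k" and rs: "\<And>a b. r x a b = - r x b a"
  shows "alt3 (Ux c h r x) (Inr \<alpha>) (Inr \<beta>) (Inl i) = -2 * ad_wedge2 c (h i) (r x) \<alpha> \<beta>"
proof -
  define A where "A = (\<Sum>p\<in>UNIV. \<Sum>q\<in>UNIV. r x p \<beta> * h i q * c p q \<alpha>)"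
  define C where "C = (\<Sum>p\<in>UNIV. \<Sum>q\<in>UNIV. r x p \<alpha> * h i q * c p q \<beta>)"
  have pA: "r x p \<beta> * h i q * c p q \<alpha> = - (r x p \<beta> * h i q * c q p \<alpha>)" for p q
    using cs[of p q \<alpha>] by simp
  have pC: "r x p \<alpha> * h i q * c p q \<beta> = - (r x p \<alpha> * h i q * c q p \<beta>)" for p q
    using cs[of p q \<beta>] by simp
  have A': "A = - (\<Sum>p\<in>UNIV. \<Sum>q\<in>UNIV. r x p \<beta> * h i q * c q p \<alpha>)"
    unfolding A_def by (simp only: pA sum_negf)
  have C': "C = - (\<Sum>p\<in>UNIV. \<Sum>q\<in>UNIV. r x p \<alpha> * h i q * c q p \<beta>)"
    unfolding C_def by (simp only: pC sum_negf)
  have B: "(\<Sum>p\<in>UNIV. \<Sum>q\<in>UNIV. h i p * r x q \<beta> * c p q \<alpha>) = - A"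
    unfolding A' by (subst sum.swap) (simp add: mult_ac)
  have D: "(\<Sum>p\<in>UNIV. \<Sum>q\<in>UNIV. h i p * r x q \<alpha> * c p q \<beta>) = - C"
    unfolding C' by (subst sum.swap) (simp add: mult_ac)
  have ad1: "(\<Sum>d\<in>UNIV. (\<Sum>p\<in>UNIV. h i p * c p d \<alpha>) * r x d \<beta>) = - A"
    unfolding A' sum_distrib_right by (simp add: mult_ac)
  have p2: "h i p * c p d \<beta> * r x \<alpha> d = r x d \<alpha> * h i p * c d p \<beta>" for p d
    using cs[of p d \<beta>] rs[of \<alpha> d] by simp
  have ad2: "(\<Sum>d\<in>UNIV. (\<Sum>p\<in>UNIV. h i p * c p d \<beta>) * r x \<alpha> d) = C"
    unfolding C_def sum_distrib_right by (simp only: p2)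
  have ad: "ad_wedge2 c (h i) (r x) \<alpha> \<beta> = - A + C"
    unfolding ad_wedge2_def lie_br_delta ad1 ad2 ..
  have u1: "Ux c h r x (Inr \<alpha>) (Inr \<beta>) (Inl i) = A" by (simp add: Ux_def A_def)
  have u2: "Ux c h r x (Inr \<alpha>) (Inl i) (Inr \<beta>) = - A" using B by (simp add: Ux_def)
  have u3: "Ux c h r x (Inr \<beta>) (Inr \<alpha>) (Inl i) = C" by (simp add: Ux_def C_def)
  have u4: "Ux c h r x (Inr \<beta>) (Inl i) (Inr \<alpha>) = - C" using D by (simp add: Ux_def)
  have u5: "Ux c h r x (Inl i) B' C'' = 0" for B' C'' by (simp add: Ux_def)
  show ?thesis unfolding alt3_def u1 u2 u3 u4 u5 ad by simp
qed

lemma L2a: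
  "alt3 (Ux c h r x) (Inr a) (Inr b) (Inr d) = alt3 (\<lambda>a b d. \<Sum>i\<in>UNIV. h i a * partial i (\<lambda>y. r y b d) x) a b d + alt3 (\<lambda>a b d. \<Sum>p\<in>UNIV. \<Sum>q\<in>UNIV. r x p b * r x q d * c p q a) a b d"
    unfolding alt3_def Ux_def by simp

lemma L2w: "(\<Sum>i\<in>UNIV. wedge12 (h i) (\<lambda>a' b'. partial i (\<lambda>y. r y a' b') x) a b d)
     = alt3 (\<lambda>a b d. \<Sum>i\<in>UNIV. h i a * partial i (\<lambda>y. r y b d) x) a b d / 2"
    unfolding wedge12_def alt3_def
    by (simp add: sum.distrib sum_subtractf mult_ac flip: sum_divide_distrib)
lemma L2s:  "lie_schouten2 c (r x) (r x) a b d = alt3 (\<lambda>a b d. \<Sum>p\<in>UNIV. \<Sum>q\<in>UNIV. r x p b * r x q d * c p q a) a b d"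
    unfolding lie_schouten2_def schouten2_def by simp
lemma L2:
  "alt3 (Ux c h r x) (Inr a) (Inr b) (Inr d) =
   2 * ((\<Sum>i\<in>UNIV. wedge12 (h i) (\<lambda>a' b'. partial i (\<lambda>y. r y a' b') x) a b d)
                   + lie_schouten2 c (r x) (r x) a b d / 2)"
  unfolding L2w L2s L2a by simp

theorem proposition2p1:
  fixes c :: "'n::finite \<Rightarrow> 'n \<Rightarrow> 'n \<Rightarrow> real"
    and h :: "'l::finite \<Rightarrow> 'n \<Rightarrow> real"
    and r :: "real^'l \<Rightarrow> 'n \<Rightarrow> 'n \<Rightarrow> real"
  assumes "lie_structure c"
    and "lin_indep_family h"
    and "abelian_family c h"
    and "smooth_wedge2_map r"
  shows "triangular_dynamical_r_matrix c h r \<longleftrightarrow>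
           schoutenA c (LambdaA h r) (LambdaA h r) = (\<lambda>_ _ _ _. 0)"
proof -
  have cs: "\<And>a b k. c a b k = - c b a k" using assms(1) unfolding lie_structure_def by blast
  have rs: "\<And>x a b. r x a b = - r x b a" using assms(4) unfolding smooth_wedge2_map_def by blast
  let ?U = "\<lambda>x. alt3 (Ux c h r x)"
  have S: "schoutenA c (LambdaA h r) (LambdaA h r) = (\<lambda>_ _ _ _. 0) \<longleftrightarrow> (\<forall>x A B C. ?U x A B C = 0)"
    by (simp add: schoutenA_eq fun_eq_iff)
  have red: "(\<forall>x A B C. ?U x A B C = 0) \<longleftrightarrow>
     (\<forall>x a b d. ?U x (Inr a) (Inr b) (Inr d) = 0) \<and> (\<forall>x a b i. ?U x (Inr a) (Inr b) (Inl i) = 0)"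
  proof
    assume "\<forall>x A B C. ?U x A B C = 0" then show "(\<forall>x a b d. ?U x (Inr a) (Inr b) (Inr d) = 0) \<and> (\<forall>x a b i. ?U x (Inr a) (Inr b) (Inl i) = 0)" by blast
  next
    assume H: "(\<forall>x a b d. ?U x (Inr a) (Inr b) (Inr d) = 0) \<and> (\<forall>x a b i. ?U x (Inr a) (Inr b) (Inl i) = 0)"
    show "\<forall>x A B C. ?U x A B C = 0"
    proof (intro allI)
      fix x A B C
      show "?U x A B C = 0"
      proof (cases A; cases B; cases C)
        fix i j k assume "A = Inl i" "B = Inl j" "C = Inl k"
        then show ?thesis using alt3_LL[OF assms(3)] by simp
      next
        fix i j k assume "A = Inl i" "B = Inl j" "C = Inr k"
        then show ?thesis using alt3_LL[OF assms(3)] by simp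
      next
        fix i j k assume "A = Inl i" "B = Inr j" "C = Inl k"
        then show ?thesis using alt3_LL[OF assms(3), of r x i k "Inr j"] alt3_swap23[of "Ux c h r x" "Inl i" "Inl k" "Inr j"] by simp
      next
        fix i j k assume "A = Inl i" "B = Inr j" "C = Inr k"
        then show ?thesis using H alt3_swap12[of "Ux c h r x" "Inr j" "Inl i" "Inr k"] alt3_swap23[of "Ux c h r x" "Inr j" "Inr k" "Inl i"] by simp
      next
        fix i j k assume "A = Inr i" "B = Inl j" "C = Inl k"
        then show ?thesis using alt3_LL[OF assms(3), of r x j k "Inr i"] alt3_swap12[of "Ux c h r x" "Inl j" "Inr i" "Inl k"] alt3_swap23[of "Ux c h r x" "Inl j" "Inl k" "Inr i"] by simp
      next
        fix i j k assume "A = Inr i" "B = Inl j" "C = Inr k"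
        then show ?thesis using H alt3_swap23[of "Ux c h r x" "Inr i" "Inr k" "Inl j"] by simp
      next
        fix i j k assume "A = Inr i" "B = Inr j" "C = Inl k"
        then show ?thesis using H by simp
      next
        fix i j k assume "A = Inr i" "B = Inr j" "C = Inr k"
        then show ?thesis using H by simp
      qed
    qed
  qed
  have zw: "(\<forall>u x. ad_wedge2 c (\<lambda>k. \<Sum>i\<in>UNIV. u i * h i k) (r x) = (\<lambda>_ _. 0))
        \<longleftrightarrow> (\<forall>x a b i. ?U x (Inr a) (Inr b) (Inl i) = 0)"
  proof
    assume H: "\<forall>u x. ad_wedge2 c (\<lambda>k. \<Sum>i\<in>UNIV. u i * h i k) (r x) = (\<lambda>_ _. 0)"
    show "\<forall>x a b i. ?U x (Inr a) (Inr b) (Inl i) = 0"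
    proof (intro allI)
      fix x a b i
      have "(\<lambda>k. \<Sum>j\<in>UNIV. (if j = i then 1 else 0) * h j k) = h i"
      proof
        fix k
        have eq: "(\<lambda>j. (if j = i then 1 else 0) * h j k) = (\<lambda>j. if j = i then h i k else 0)" by auto
        show "(\<Sum>j\<in>UNIV. (if j = i then 1 else 0) * h j k) = h i k"
          unfolding eq using sum.delta[of UNIV i "\<lambda>_. h i k"] by simp
      qed
      then have "ad_wedge2 c (h i) (r x) = (\<lambda>_ _. 0)" using H[rule_format, of "\<lambda>j. if j = i then 1 else 0" x] by simp
      then show "?U x (Inr a) (Inr b) (Inl i) = 0" using L1[where c=c and r=r and x=x, OF cs rs] by simp
    qed
  next
    assume H: "\<forall>x a b i. ?U x (Inr a) (Inr b) (Inl i) = 0"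
    have "ad_wedge2 c (h i) (r x) a b = 0" for i x a b using H[rule_format, of x a b i] L1[where c=c and r=r and x=x and h=h, OF cs rs] by simp
    then show "\<forall>u x. ad_wedge2 c (\<lambda>k. \<Sum>i\<in>UNIV. u i * h i k) (r x) = (\<lambda>_ _. 0)"
      by (simp add: fun_eq_iff ad_lin)
  qed
  have yb: "(\<forall>x. (\<lambda>a b d. (\<Sum>i\<in>UNIV. wedge12 (h i) (\<lambda>a' b'. partial i (\<lambda>y. r y a' b') x) a b d)
                   + lie_schouten2 c (r x) (r x) a b d / 2) = (\<lambda>_ _ _. 0))
     \<longleftrightarrow> (\<forall>x a b d. ?U x (Inr a) (Inr b) (Inr d) = 0)"
    unfolding fun_eq_iff L2 mult_eq_0_iff by simp
  have T: "triangular_dynamical_r_matrix c h r \<longleftrightarrow> smooth_wedge2_map r \<and> (\<forall>x a b i. ?U x (Inr a) (Inr b) (Inl i) = 0) \<and> (\<forall>x a b d. ?U x (Inr a) (Inr b) (Inr d) = 0)"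
    unfolding triangular_dynamical_r_matrix_def zw yb by (rule refl)
  show ?thesis unfolding T S red using assms(4) by blast
qed

end
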